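(* Let $G$ be a graph with no isolated vertices such that $\mathcal{Z}^{\mathrm{TE}}_+(G)\cong K_n$. Then either $G\cong K_n$, or $G$ is a tree on $n$ vertices.
   Context: PSD forcing: vertices are colored blue or white; if $B$ is the current set of blue vertices, $C$ a connected component of $G-B$, and $u$ a blue vertex with $N_G(u)\cap V(C)=\{v\}$, then $u$ may force $v$ to become blue. A PSD forcing set is a set of initially blue vertices from which repeated application of this rule turns every vertex blue; $\mathrm{Z}_+(G)$ is the minimum size of a PSD forcing set. $\mathcal{Z}^{\mathrm{TE}}_+(G)$ has as vertices the minimum PSD forcing sets of $G$, with $S_1S_2$ an edge iff $S_1\setminus S_2=\{v_1\}$ and $S_2\setminus S_1=\{v_2\}$ for some vertices $v_1,v_2$. *)

theory Defs
  imports Main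
begin

definition simple_graph :: "'a set \<Rightarrow> ('a \<Rightarrow> 'a \<Rightarrow> bool) \<Rightarrow> bool" where
  "simple_graph V E \<longleftrightarrow> finite V \<and> (\<forall>x y. E x y \<longrightarrow> x \<in> V \<and> y \<in> V)
     \<and> (\<forall>x y. E x y \<longrightarrow> E y x) \<and> (\<forall>x. \<not> E x x)"

definition conn_in :: "'a set \<Rightarrow> ('a \<Rightarrow> 'a \<Rightarrow> bool) \<Rightarrow> 'a \<Rightarrow> 'a \<Rightarrow> bool" where
  "conn_in W E x y \<longleftrightarrow> x \<in> W \<and> (\<lambda>a b. a \<in> W \<and> b \<in> W \<and> E a b)\<^sup>*\<^sup>* x y"

definition component_of :: "'a set \<Rightarrow> ('a \<Rightarrow> 'a \<Rightarrow> bool) \<Rightarrow> 'a \<Rightarrow> 'a set" where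
  "component_of W E x = {y. conn_in W E x y}"

inductive psd_reach :: "'a set \<Rightarrow> ('a \<Rightarrow> 'a \<Rightarrow> bool) \<Rightarrow> 'a set \<Rightarrow> 'a set \<Rightarrow> bool"
  for V E S where
  start: "psd_reach V E S S"
| force: "\<lbrakk> psd_reach V E S B; u \<in> B; x \<in> V - B; C = component_of (V - B) E x;
            {w \<in> C. E u w} = {v} \<rbrakk> \<Longrightarrow> psd_reach V E S (insert v B)"

definition psd_forcing_set :: "'a set \<Rightarrow> ('a \<Rightarrow> 'a \<Rightarrow> bool) \<Rightarrow> 'a set \<Rightarrow> bool" where
  "psd_forcing_set V E S \<longleftrightarrow> S \<subseteq> V \<and> psd_reach V E S V"

definition Zplus :: "'a set \<Rightarrow> ('a \<Rightarrow> 'a \<Rightarrow> bool) \<Rightarrow> nat" where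
  "Zplus V E = (LEAST k. \<exists>S. psd_forcing_set V E S \<and> card S = k)"

definition min_psd_sets :: "'a set \<Rightarrow> ('a \<Rightarrow> 'a \<Rightarrow> bool) \<Rightarrow> 'a set set" where
  "min_psd_sets V E = {S. psd_forcing_set V E S \<and> card S = Zplus V E}"

definition te_adj :: "'a set \<Rightarrow> 'a set \<Rightarrow> bool" where
  "te_adj S1 S2 \<longleftrightarrow> (\<exists>v1 v2. S1 - S2 = {v1} \<and> S2 - S1 = {v2})"

definition graph_iso :: "'a set \<Rightarrow> ('a \<Rightarrow> 'a \<Rightarrow> bool) \<Rightarrow> 'b set \<Rightarrow> ('b \<Rightarrow> 'b \<Rightarrow> bool) \<Rightarrow> bool" where
  "graph_iso V1 E1 V2 E2 \<longleftrightarrow> (\<exists>f. bij_betw f V1 V2 \<and>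
      (\<forall>x\<in>V1. \<forall>y\<in>V1. E1 x y \<longleftrightarrow> E2 (f x) (f y)))"

definition K_verts :: "nat \<Rightarrow> nat set" where "K_verts n = {0..<n}"
definition K_adj :: "nat \<Rightarrow> nat \<Rightarrow> bool" where "K_adj i j \<longleftrightarrow> i \<noteq> j"

definition connected_graph :: "'a set \<Rightarrow> ('a \<Rightarrow> 'a \<Rightarrow> bool) \<Rightarrow> bool" where
  "connected_graph V E \<longleftrightarrow> V \<noteq> {} \<and> (\<forall>x\<in>V. \<forall>y\<in>V. conn_in V E x y)"

definition is_cycle :: "'a set \<Rightarrow> ('a \<Rightarrow> 'a \<Rightarrow> bool) \<Rightarrow> 'a list \<Rightarrow> bool" where
  "is_cycle V E cs \<longleftrightarrow> length cs \<ge> 3 \<and> distinct cs \<and> set cs \<subseteq> V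
     \<and> (\<forall>i. Suc i < length cs \<longrightarrow> E (cs ! i) (cs ! Suc i)) \<and> E (last cs) (hd cs)"

definition is_tree :: "'a set \<Rightarrow> ('a \<Rightarrow> 'a \<Rightarrow> bool) \<Rightarrow> bool" where
  "is_tree V E \<longleftrightarrow> connected_graph V E \<and> \<not> (\<exists>cs. is_cycle V E cs)"

end

theory Submission
  imports Defs
begin

lemma sg_sym: "simple_graph V E \<Longrightarrow> E x y \<Longrightarrow> E y x"
  unfolding simple_graph_def by blast
lemma sg_in: "simple_graph V E \<Longrightarrow> E x y \<Longrightarrow> x \<in> V \<and> y \<in> V"
  unfolding simple_graph_def by blast
lemma sg_irr: "simple_graph V E \<Longrightarrow> \<not> E x x"
  unfolding simple_graph_def by blast
lemma sg_fin: "simple_graph V E \<Longrightarrow> finite V"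
  unfolding simple_graph_def by blast

lemma conn_refl: "x \<in> W \<Longrightarrow> conn_in W E x x"
  unfolding conn_in_def by auto

lemma conn_inv:
  assumes "conn_in W E x y" "P x"
    "\<And>a b. a \<in> W \<Longrightarrow> b \<in> W \<Longrightarrow> E a b \<Longrightarrow> P a \<Longrightarrow> P b"
  shows "P y"
proof -
  have "(\<lambda>a b. a \<in> W \<and> b \<in> W \<and> E a b)\<^sup>*\<^sup>* x y" using assms(1) unfolding conn_in_def by auto
  then show ?thesis
    by (induction rule: rtranclp_induct) (use assms in auto)
qed

lemma conn_mem: "conn_in W E x y \<Longrightarrow> x \<in> W \<and> y \<in> W"
  using conn_inv[of W E x y "\<lambda>z. z \<in> W"] unfolding conn_in_def by auto

lemma conn_trans: "conn_in W E x y \<Longrightarrow> conn_in W E y z \<Longrightarrow> conn_in W E x z"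
  unfolding conn_in_def by auto

lemma conn_step: "conn_in W E x y \<Longrightarrow> z \<in> W \<Longrightarrow> E y z \<Longrightarrow> conn_in W E x z"
  using conn_mem[of W E x y] unfolding conn_in_def
  by (auto intro: rtranclp.rtrancl_into_rtrancl)

lemma conn_sym:
  assumes "simple_graph V E" "conn_in W E x y" shows "conn_in W E y x"
proof -
  have "(\<lambda>a b. a \<in> W \<and> b \<in> W \<and> E a b)\<^sup>*\<^sup>* x y" using assms(2) unfolding conn_in_def by auto
  then have "(\<lambda>a b. a \<in> W \<and> b \<in> W \<and> E a b)\<^sup>*\<^sup>* y x"
  proof (induction rule: rtranclp_induct)
    case base then show ?case by auto
  next
    case (step b c)
    then have "(\<lambda>a b. a \<in> W \<and> b \<in> W \<and> E a b) c b" using sg_sym[OF assms(1)] by auto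
    from converse_rtranclp_into_rtranclp[OF this step.IH] show ?case .
  qed
  then show ?thesis using conn_mem[OF assms(2)] unfolding conn_in_def by auto
qed

lemma conn_mono: "W \<subseteq> W' \<Longrightarrow> conn_in W E x y \<Longrightarrow> conn_in W' E x y"
  unfolding conn_in_def
  by (auto elim!: rtranclp_mono[THEN predicate2D, rotated])

lemma comp_iff: "y \<in> component_of W E x \<longleftrightarrow> conn_in W E x y"
  unfolding component_of_def by auto

lemma comp_sub: "component_of W E x \<subseteq> W"
  using conn_mem unfolding component_of_def by fastforce

lemma comp_self: "x \<in> W \<Longrightarrow> x \<in> component_of W E x"
  using conn_refl comp_iff by fastforce

lemma comp_closed: "y \<in> component_of W E x \<Longrightarrow> z \<in> W \<Longrightarrow> E y z \<Longrightarrow> z \<in> component_of W E x"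
  using conn_step comp_iff by metis

lemma comp_single: "(\<And>z. z \<in> W \<Longrightarrow> \<not> E a z) \<Longrightarrow> component_of W E a \<subseteq> {a}"
proof
  fix y assume h: "\<And>z. z \<in> W \<Longrightarrow> \<not> E a z" and "y \<in> component_of W E a"
  then have "conn_in W E a y" using comp_iff by metis
  then show "y \<in> {a}" by (rule conn_inv) (use h in auto)
qed

lemma conn_restrict:
  assumes "conn_in W E a b" "component_of W E a \<subseteq> W'"
  shows "conn_in W' E a b"
proof -
  have "conn_in W E a b \<and> conn_in W' E a b"
    by (rule conn_inv[OF assms(1)])
       (use assms conn_mem[OF assms(1)] in \<open>auto intro: conn_refl conn_step simp: comp_iff subset_iff\<close>)
  then show ?thesis by auto
qed

lemma reach_sup: "psd_reach V E S B \<Longrightarrow> S \<subseteq> B"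
  by (induction rule: psd_reach.induct) auto

lemma reach_sub: "psd_reach V E S B \<Longrightarrow> B \<subseteq> S \<union> V"
proof (induction rule: psd_reach.induct)
  case start then show ?case by auto
next
  case (force B u x C v)
  then have "v \<in> C" by auto
  then have "v \<in> V" using force.hyps(4) comp_sub by fastforce
  then show ?case using force by auto
qed

lemma reach_mono:
  assumes "psd_reach V E S B"
  shows "psd_reach V E R B' \<Longrightarrow> S \<subseteq> B' \<Longrightarrow> \<exists>B''. psd_reach V E R B'' \<and> B \<subseteq> B'' \<and> B' \<subseteq> B''"
  using assms
proof (induction rule: psd_reach.induct)
  case start then show ?case by blast
next
  case (force B u x C v)
  note hB = force.hyps(1) and uB = force.hyps(2) and xB = force.hyps(3)
    and Cdef = force.hyps(4) and Cv = force.hyps(5)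
  from force.IH[OF force.prems] obtain B'' where B'': "psd_reach V E R B''" "B \<subseteq> B''" "B' \<subseteq> B''"
    by blast
  show ?case
  proof (cases "v \<in> B''")
    case True then show ?thesis using B'' by blast
  next
    case False
    have vC: "v \<in> C" "E u v" using Cv by auto
    then have vV: "v \<in> V" using Cdef comp_sub by fastforce
    have "{w \<in> component_of (V - B'') E v. E u w} = {v}"
    proof -
      have sub: "V - B'' \<subseteq> V - B" using B''(2) by blast
      have xv: "conn_in (V - B) E x v" using vC(1) unfolding Cdef by (simp add: comp_iff)
      { fix w assume w: "w \<in> component_of (V - B'') E v" "E u w"
        then have "conn_in (V - B'') E v w" by (simp add: comp_iff)
        then have vw: "conn_in (V - B) E v w" by (rule conn_mono[OF sub])
        have "w \<in> C" by (simp add: Cdef comp_iff conn_trans[OF xv vw])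
        then have "w = v" using Cv w(2) by blast }
      moreover have "v \<in> component_of (V - B'') E v" using comp_self[of v "V - B''" E] vV False by blast
      ultimately show ?thesis using vC(2) by blast
    qed
    then have "psd_reach V E R (insert v B'')"
      using psd_reach.force[OF B''(1), of u v "component_of (V - B'') E v" v] uB B'' vV False by auto
    then show ?thesis using B'' by blast
  qed
qed

lemma reach_then:
  assumes "psd_reach V E R B" "psd_forcing_set V E S" "S \<subseteq> B" "R \<subseteq> V"
  shows "psd_reach V E R V"
proof -
  have "psd_reach V E S V" using assms(2) unfolding psd_forcing_set_def by auto
  from reach_mono[OF this assms(1,3)] obtain B'' where
    "psd_reach V E R B''" "V \<subseteq> B''" by blast
  moreover have "B'' \<subseteq> V" using reach_sub[OF \<open>psd_reach V E R B''\<close>] assms(4) by auto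
  ultimately show ?thesis by auto
qed

lemma forcing_super:
  assumes "psd_forcing_set V E S" "S \<subseteq> S'" "S' \<subseteq> V"
  shows "psd_forcing_set V E S'"
  using reach_then[OF psd_reach.start assms(1)] assms unfolding psd_forcing_set_def by auto

lemma first_force:
  assumes G: "simple_graph V E" and F: "psd_forcing_set V E S" and x: "x \<in> V" "x \<notin> S"
  shows "\<exists>u\<in>S. \<exists>v. {w \<in> component_of (V - S) E x. E u w} = {v}"
proof -
  define C where "C = component_of (V - S) E x"
  have SV: "S \<subseteq> V" using F unfolding psd_forcing_set_def by auto
  have "psd_reach V E S V" using F unfolding psd_forcing_set_def by auto
  have "psd_reach V E S B \<Longrightarrow> B \<inter> C = {} \<or> (\<exists>u\<in>S. \<exists>v. {w \<in> C. E u w} = {v})" for B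
  proof (induction rule: psd_reach.induct)
    case start then show ?case using comp_sub unfolding C_def by fastforce
  next
    case (force B u x' C' v)
    show ?case
    proof (cases "B \<inter> C = {}")
      case False then show ?thesis using force.IH by auto
    next
      case True
      show ?thesis
      proof (cases "v \<in> C")
        case False then show ?thesis using True by auto
      next
        case vC: True
        have SB: "S \<subseteq> B" "B \<subseteq> S \<union> V" using reach_sup[OF force.hyps(1)] reach_sub[OF force.hyps(1)] by auto
        have vC': "v \<in> C'" "E u v" using force.hyps(5) by auto
        have CV: "C \<subseteq> V - B" using True comp_sub unfolding C_def by fastforce
        have uS: "u \<in> S"
        proof (rule ccontr)
          assume "u \<notin> S"
          then have "u \<in> V - S" using SB force.hyps(2) by auto
          then have "u \<in> C" using comp_closed[of v "V - S" E x u] vC sg_sym[OF G vC'(2)] unfolding C_def by blast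
          then show False using CV force.hyps(2) by auto
        qed
        have "C \<subseteq> C'"
        proof
          fix w assume "w \<in> C"
          then have "conn_in (V - S) E v w" using vC unfolding C_def
            by (meson comp_iff conn_sym[OF G] conn_trans)
          moreover have "component_of (V - S) E v \<subseteq> V - B"
            using CV vC unfolding C_def
            by (metis comp_iff conn_trans subset_iff)
          ultimately have "conn_in (V - B) E v w" by (rule conn_restrict)
          moreover have "conn_in (V - B) E x' v" using vC' force.hyps(4) comp_iff by metis
          ultimately show "w \<in> C'" using force.hyps(4) comp_iff conn_trans by metis
        qed
        then have "{w \<in> C. E u w} = {v}" using force.hyps(5) vC vC' by auto
        then show ?thesis using uS by auto
      qed
    qed
  qed
  from this[OF \<open>psd_reach V E S V\<close>] show ?thesis
    using comp_self[of x "V - S" E] x unfolding C_def by auto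
qed

lemma comp_shrink:
  assumes G: "simple_graph V E" and u: "u \<in> S"
    and w: "{z \<in> component_of (V - S) E x. E u z} = {w}"
    and y0: "y0 \<in> component_of (V - S) E x"
    and c: "conn_in (V - insert w (S - {u})) E y0 y"
  shows "y \<in> component_of (V - S) E x"
proof (rule conn_inv[where P="\<lambda>z. z \<in> component_of (V - S) E x", OF c y0])
  fix a b assume ab: "a \<in> V - insert w (S - {u})" "b \<in> V - insert w (S - {u})" "E a b"
    "a \<in> component_of (V - S) E x"
  show "b \<in> component_of (V - S) E x"
  proof (cases "b = u")
    case True
    then have "a \<in> {z \<in> component_of (V - S) E x. E u z}" using ab sg_sym[OF G ab(3)] by auto
    then show ?thesis using w ab by auto
  next
    case False
    then show ?thesis using ab comp_closed by fastforce
  qed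
qed

lemma swap:
  assumes G: "simple_graph V E" and F: "psd_forcing_set V E S" and u: "u \<in> S"
    and w: "{z \<in> component_of (V - S) E x. E u z} = {v}"
  shows "psd_forcing_set V E (insert v (S - {u}))"
proof -
  define C where "C = component_of (V - S) E x"
  define S' where "S' = insert v (S - {u})"
  have SV: "S \<subseteq> V" using F unfolding psd_forcing_set_def by auto
  have vC: "v \<in> C" "E u v" using w unfolding C_def by auto
  have CV: "C \<subseteq> V - S" unfolding C_def by (rule comp_sub)
  have vV: "v \<in> V - S" using vC CV by blast
  have S'V: "S' \<subseteq> V" using SV vV unfolding S'_def by blast
  have uW: "u \<in> V - S'" using u SV vV unfolding S'_def by blast
  have key: "{z \<in> component_of (V - S') E u. E v z} = {u}"
  proof -
    { fix z assume z: "z \<in> component_of (V - S') E u" "E v z" "z \<noteq> u"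
      have zW: "z \<in> V - S'" by (rule subsetD[OF comp_sub z(1)])
      then have "z \<in> V - S" using z(3) unfolding S'_def by blast
      then have zC: "z \<in> C" unfolding C_def by (rule comp_closed[OF vC(1)[unfolded C_def] _ z(2)])
      have "conn_in (V - S') E u z" using z(1) by (simp add: comp_iff)
      then have zu: "conn_in (V - S') E z u" by (rule conn_sym[OF G])
      have "u \<in> C"
        unfolding C_def
        by (rule comp_shrink[OF G u w _ zu[unfolded S'_def]]) (use zC C_def in blast)
      then have False using u CV by blast }
    moreover have "u \<in> component_of (V - S') E u" using comp_self[of u "V - S'" E] uW by blast
    ultimately show ?thesis using vC sg_sym[OF G vC(2)] by blast
  qed
  have "psd_reach V E S' (insert u S')"
    by (rule psd_reach.force[OF psd_reach.start, where u=v and x=u and v=u and C="component_of (V - S') E u"])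
       (use key uW in \<open>auto simp: S'_def\<close>)
  moreover have "insert u S' = insert v S" unfolding S'_def using u by auto
  ultimately have "psd_reach V E S' V" using reach_then[OF _ F _ S'V] by auto
  then show ?thesis using S'V unfolding psd_forcing_set_def S'_def by auto
qed

lemma zplus_le: "psd_forcing_set V E S \<Longrightarrow> Zplus V E \<le> card S"
  unfolding Zplus_def by (rule Least_le) blast

lemma zplus_ex: "\<exists>S. psd_forcing_set V E S \<and> card S = Zplus V E"
proof -
  have "psd_forcing_set V E V" unfolding psd_forcing_set_def by (auto intro: psd_reach.start)
  then have "\<exists>k S. psd_forcing_set V E S \<and> card S = k" by blast
  then show ?thesis unfolding Zplus_def by (rule LeastI_ex)
qed

lemma minF_iff: "S \<in> min_psd_sets V E \<longleftrightarrow> psd_forcing_set V E S \<and> card S = Zplus V E"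
  unfolding min_psd_sets_def by simp

lemma forcing_sub: "psd_forcing_set V E S \<Longrightarrow> S \<subseteq> V"
  unfolding psd_forcing_set_def by simp

lemma min_swap:
  assumes G: "simple_graph V E" and S: "S \<in> min_psd_sets V E" and u: "u \<in> S"
    and w: "{z \<in> component_of (V - S) E x. E u z} = {v}"
  shows "insert v (S - {u}) \<in> min_psd_sets V E"
proof -
  have F: "psd_forcing_set V E S" "card S = Zplus V E" using S minF_iff by blast+
  have fin: "finite S" using forcing_sub[OF F(1)] sg_fin[OF G] finite_subset by blast
  have vC: "v \<in> component_of (V - S) E x" using w by auto
  have "v \<notin> S" using subsetD[OF comp_sub vC] by blast
  then have "card (insert v (S - {u})) = card S" using fin u
    by (simp add: card_Diff_singleton) (metis Suc_pred card_gt_0_iff emptyE)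
  then show ?thesis using swap[OF G F(1) u w] F(2) minF_iff by metis
qed

lemma force1:
  assumes G: "simple_graph V E" and y: "y \<in> R" and x: "x \<in> V" "x \<notin> R" and e: "E y x"
    and nb: "\<And>z. z \<in> V - R \<Longrightarrow> \<not> E x z"
  shows "psd_reach V E R (insert x R)"
proof -
  have c1: "component_of (V - R) E x \<subseteq> {x}" by (rule comp_single) (use nb in blast)
  have c2: "x \<in> component_of (V - R) E x" using comp_self[of x "V - R" E] x by blast
  have "{w \<in> component_of (V - R) E x. E y w} = {x}" using c1 c2 e by blast
  note r = psd_reach.force[OF psd_reach.start y _ refl this]
  show ?thesis by (rule r) (use x in blast)
qed

lemma U_lemma:
  assumes G: "simple_graph V E"
  shows "S \<in> min_psd_sets V E \<Longrightarrow> y \<in> V \<Longrightarrow> \<exists>S'\<in>min_psd_sets V E. y \<in> S'"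
proof (induction "card (component_of (V - S) E y)" arbitrary: S rule: less_induct)
  case less
  show ?case
  proof (cases "y \<in> S")
    case True then show ?thesis using less.prems by blast
  next
    case False
    have F: "psd_forcing_set V E S" using less.prems minF_iff by blast
    obtain u w where u: "u \<in> S" and w: "{z \<in> component_of (V - S) E y. E u z} = {w}"
      using first_force[OF G F less.prems(2) False] by blast
    define S1 where "S1 = insert w (S - {u})"
    have S1: "S1 \<in> min_psd_sets V E" unfolding S1_def by (rule min_swap[OF G less.prems(1) u w])
    show ?thesis
    proof (cases "w = y")
      case True then show ?thesis using S1 unfolding S1_def by blast
    next
      case wy: False
      have y0: "y \<in> component_of (V - S) E y" using comp_self[of y "V - S" E] less.prems(2) False by blast
      have sub: "component_of (V - S1) E y \<subseteq> component_of (V - S) E y"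
      proof
        fix z assume "z \<in> component_of (V - S1) E y"
        then have "conn_in (V - insert w (S - {u})) E y z" unfolding S1_def by (simp add: comp_iff)
        then show "z \<in> component_of (V - S) E y" by (rule comp_shrink[OF G u w y0])
      qed
      have wC: "w \<in> component_of (V - S) E y" using w by auto
      have "w \<notin> component_of (V - S1) E y" using comp_sub[of "V - S1" E y] unfolding S1_def by auto
      then have psub: "component_of (V - S1) E y \<subset> component_of (V - S) E y" using sub wC by blast
      have "finite (component_of (V - S) E y)"
        using comp_sub[of "V - S" E y] sg_fin[OF G] finite_subset by blast
      then have "card (component_of (V - S1) E y) < card (component_of (V - S) E y)"
        using psub psubset_card_mono by blast
      then show ?thesis using less.hyps S1 less.prems(2) by blast
    qed
  qed
qed

lemma I_nb:
  assumes G: "simple_graph V E" and iso: "\<forall>v\<in>V. \<exists>w\<in>V. E v w"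
    and S: "S \<in> min_psd_sets V E" and a: "a \<in> S"
  shows "\<exists>y. E a y \<and> y \<notin> S"
proof (rule ccontr)
  assume "\<not> (\<exists>y. E a y \<and> y \<notin> S)"
  then have allS: "\<And>y. E a y \<Longrightarrow> y \<in> S" by blast
  have F: "psd_forcing_set V E S" "card S = Zplus V E" using S minF_iff by blast+
  have SV: "S \<subseteq> V" by (rule forcing_sub[OF F(1)])
  have aV: "a \<in> V" using a SV by blast
  obtain b where b: "b \<in> V" "E a b" using iso aV by blast
  have ba: "b \<noteq> a" using b(2) sg_irr[OF G] by metis
  have bS: "b \<in> S - {a}" using allS[OF b(2)] ba by blast
  define S0 where "S0 = S - {a}"
  have r1: "psd_reach V E S0 (insert a S0)"
  proof (rule force1[OF G bS[folded S0_def] aV])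
    show "a \<notin> S0" unfolding S0_def by blast
    show "E b a" by (rule sg_sym[OF G b(2)])
    fix z assume z: "z \<in> V - S0"
    show "\<not> E a z"
    proof
      assume "E a z"
      then have "z \<in> S" by (rule allS)
      then have "z = a" using z unfolding S0_def by blast
      then show False using \<open>E a z\<close> sg_irr[OF G, of a] by simp
    qed
  qed
  have eq: "insert a S0 = S" unfolding S0_def using a by auto
  have r2: "psd_reach V E S0 S" using r1 eq by simp
  have S0V: "S0 \<subseteq> V" unfolding S0_def using SV by blast
  have "psd_reach V E S0 V" by (rule reach_then[OF r2 F(1) order_refl S0V])
  then have "psd_forcing_set V E S0" unfolding psd_forcing_set_def using S0V by blast
  then have le: "Zplus V E \<le> card S0" by (rule zplus_le)
  have fin: "finite S" using SV sg_fin[OF G] finite_subset by blast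
  have c: "card S0 = card S - 1" unfolding S0_def using a by (simp add: card_Diff_singleton)
  have "card S > 0" using fin a card_gt_0_iff by blast
  then show False using c F(2) le by linarith
qed

lemma I_main:
  assumes G: "simple_graph V E"
  shows "S \<in> min_psd_sets V E \<Longrightarrow> a \<in> S \<Longrightarrow> E a y \<Longrightarrow> y \<notin> S
    \<Longrightarrow> \<exists>S'\<in>min_psd_sets V E. a \<notin> S'"
proof (induction "card (component_of (V - S) E y)" arbitrary: S y rule: less_induct)
  case less
  define C where "C = component_of (V - S) E y"
  have F: "psd_forcing_set V E S" using less.prems minF_iff by blast
  have yV: "y \<in> V" using sg_in[OF G less.prems(3)] by blast
  have yC: "y \<in> C" unfolding C_def using comp_self[of y "V - S" E] yV less.prems(4) by blast
  have CS: "C \<subseteq> V - S" unfolding C_def by (rule comp_sub)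
  show ?case
  proof (cases "\<exists>y'. {z \<in> C. E a z} = {y'}")
    case True
    then obtain y' where y': "{z \<in> component_of (V - S) E y. E a z} = {y'}" unfolding C_def by blast
    have m: "insert y' (S - {a}) \<in> min_psd_sets V E" by (rule min_swap[OF G less.prems(1,2) y'])
    have y'C: "y' \<in> C" using y' unfolding C_def by auto
    have "y' \<noteq> a" using subsetD[OF CS y'C] less.prems(2) by auto
    then have "a \<notin> insert y' (S - {a})" by simp
    with m show ?thesis by (rule rev_bexI)
  next
    case False
    have ay: "y \<in> {z \<in> C. E a z}" using yC less.prems(3) by blast
    then obtain y2 where y2: "y2 \<in> C" "E a y2" "y2 \<noteq> y" using False by blast
    obtain u w where u: "u \<in> S" and w: "{z \<in> component_of (V - S) E y. E u z} = {w}"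
      using first_force[OF G F yV less.prems(4)] by blast
    have ua: "u \<noteq> a" using w False unfolding C_def by blast
    define S1 where "S1 = insert w (S - {u})"
    have S1: "S1 \<in> min_psd_sets V E" unfolding S1_def by (rule min_swap[OF G less.prems(1) u w])
    have wC: "w \<in> C" using w unfolding C_def by auto
    obtain y' where y': "y' \<in> C" "E a y'" "y' \<noteq> w"
      using yC less.prems(3) y2 by metis
    have aS1: "a \<in> S1" unfolding S1_def using ua less.prems(2) by blast
    have y'S1: "y' \<notin> S1" unfolding S1_def using y' CS by blast
    have y'C0: "y' \<in> component_of (V - S) E y" using y'(1) unfolding C_def .
    have sub: "component_of (V - S1) E y' \<subseteq> C"
    proof
      fix z assume "z \<in> component_of (V - S1) E y'"
      then have "conn_in (V - insert w (S - {u})) E y' z" unfolding S1_def by (simp add: comp_iff)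
      then show "z \<in> C" unfolding C_def by (rule comp_shrink[OF G u w y'C0])
    qed
    have "w \<notin> component_of (V - S1) E y'" using comp_sub[of "V - S1" E y'] unfolding S1_def by auto
    then have psub: "component_of (V - S1) E y' \<subset> C" using sub wC by blast
    have "finite C" using CS sg_fin[OF G] finite_subset by blast
    then have "card (component_of (V - S1) E y') < card (component_of (V - S) E y)"
      using psub psubset_card_mono unfolding C_def by blast
    from less.hyps[OF this S1 aS1 y'(2) y'S1] show ?thesis .
  qed
qed

lemma I_lemma:
  assumes G: "simple_graph V E" and iso: "\<forall>v\<in>V. \<exists>w\<in>V. E v w"
    and S: "S \<in> min_psd_sets V E" and a: "a \<in> S"
  shows "\<exists>S'\<in>min_psd_sets V E. a \<notin> S'"
  using I_nb[OF G iso S a] I_main[OF G S a] by blast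

lemma reach_empty: "psd_reach V E {} B \<Longrightarrow> B = {}"
  by (induction rule: psd_reach.induct) auto

lemma reach_conn:
  assumes "psd_reach V E {x} B" "x \<in> V"
  shows "y \<in> B \<Longrightarrow> conn_in V E x y"
  using assms(1)
proof (induction arbitrary: y rule: psd_reach.induct)
  case start then show ?case using assms(2) conn_refl by fastforce
next
  case (force B u x' C v)
  show ?case
  proof (cases "y = v")
    case False then show ?thesis using force.prems force.IH by blast
  next
    case True
    have vC: "v \<in> C" "E u v" using force.hyps(5) by auto
    have "v \<in> V - B" using subsetD[OF comp_sub vC(1)[unfolded force.hyps(4)]] .
    then have vV: "v \<in> V" by blast
    have "conn_in V E x u" by (rule force.IH[OF force.hyps(2)])
    from conn_step[OF this vV vC(2)] show ?thesis using True by simp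
  qed
qed

lemma pair_set:
  assumes "p \<in> S0" "p' \<in> S0" "q \<notin> S0" "q' \<notin> S0" "p \<noteq> p'" "q \<noteq> q'"
  shows "insert q (S0 - {p}) \<noteq> insert q' (S0 - {p'}) \<and> \<not> te_adj (insert q (S0 - {p})) (insert q' (S0 - {p'}))"
proof
  have "q \<in> insert q (S0 - {p}) - insert q' (S0 - {p'})" using assms by auto
  then show "insert q (S0 - {p}) \<noteq> insert q' (S0 - {p'})" by auto
  have "p' \<in> insert q (S0 - {p}) - insert q' (S0 - {p'})" using assms by auto
  moreover have "q \<in> insert q (S0 - {p}) - insert q' (S0 - {p'})" using assms by auto
  moreover have "q \<noteq> p'" using assms by auto
  ultimately show "\<not> te_adj (insert q (S0 - {p})) (insert q' (S0 - {p'}))"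
    unfolding te_adj_def by (metis singletonD)
qed

lemma cycle_conn:
  assumes c: "is_cycle V E cs"
  shows "1 \<le> i \<Longrightarrow> i < length cs \<Longrightarrow> conn_in (V - {cs ! 0}) E (cs ! 1) (cs ! i)"
proof (induction i)
  case 0 then show ?case by simp
next
  case (Suc j)
  have len: "length cs \<ge> 3" "distinct cs" "set cs \<subseteq> V" using c unfolding is_cycle_def by auto
  have mem: "cs ! Suc j \<in> V - {cs ! 0}"
  proof -
    have "cs ! Suc j \<in> V" using len(3) nth_mem[OF Suc.prems(2)] by blast
    moreover have "cs ! Suc j \<noteq> cs ! 0" using len(2) Suc.prems(2) nth_eq_iff_index_eq by fastforce
    ultimately show ?thesis by blast
  qed
  show ?case
  proof (cases "j = 0")
    case True then show ?thesis using conn_refl[OF mem] by simp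
  next
    case False
    then have ih: "conn_in (V - {cs ! 0}) E (cs ! 1) (cs ! j)" using Suc by simp
    have "E (cs ! j) (cs ! Suc j)" using c Suc.prems(2) unfolding is_cycle_def by blast
    from conn_step[OF ih mem this] show ?thesis .
  qed
qed

lemma no_cycle_single:
  assumes G: "simple_graph V E" and F: "psd_forcing_set V E {x}" and c: "is_cycle V E cs"
    and x: "x = cs ! 0"
  shows False
proof -
  have len: "length cs \<ge> 3" "distinct cs" "set cs \<subseteq> V" using c unfolding is_cycle_def by auto
  have ne: "cs \<noteq> []" using len(1) by auto
  have c1V: "cs ! 1 \<in> V" using len nth_mem[of 1 cs] by auto
  have "cs ! 1 \<noteq> cs ! 0" using nth_eq_iff_index_eq[OF len(2), of 1 0] len(1) ne by simp
  then have c1x: "cs ! 1 \<notin> {x}" using x by simp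
  obtain u v where u: "u \<in> {x}" and w: "{z \<in> component_of (V - {x}) E (cs ! 1). E u z} = {v}"
    using first_force[OF G F c1V c1x] by blast
  have ux: "u = x" using u by simp
  have e1: "E x (cs ! 1)" using c len(1) x unfolding is_cycle_def by auto
  have lastc: "last cs = cs ! (length cs - 1)" using ne by (simp add: last_conv_nth)
  have e2: "E x (last cs)" using c x ne sg_sym[OF G] unfolding is_cycle_def by (simp add: hd_conv_nth)
  have "conn_in (V - {cs ! 0}) E (cs ! 1) (cs ! (length cs - 1))"
    by (rule cycle_conn[OF c]) (use len(1) in auto)
  then have l1: "last cs \<in> component_of (V - {x}) E (cs ! 1)" using lastc x by (simp add: comp_iff)
  have c1: "cs ! 1 \<in> component_of (V - {x}) E (cs ! 1)" using comp_self[of "cs ! 1" "V - {x}" E] c1V c1x by blast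
  have neq: "cs ! 1 \<noteq> last cs" using lastc nth_eq_iff_index_eq[OF len(2), of 1 "length cs - 1"] len(1) ne by simp
  have "cs ! 1 \<in> {z \<in> component_of (V - {x}) E (cs ! 1). E u z}" using c1 e1 ux by simp
  moreover have "last cs \<in> {z \<in> component_of (V - {x}) E (cs ! 1). E u z}" using l1 e2 ux by simp
  ultimately have "cs ! 1 \<in> {v}" "last cs \<in> {v}" unfolding w by simp_all
  then show False using neq by simp
qed

theorem theorem4p10:
  fixes V :: "'a set" and E :: "'a \<Rightarrow> 'a \<Rightarrow> bool" and n :: nat
  assumes "simple_graph V E"
    and "V \<noteq> {}"
    and "\<forall>v\<in>V. \<exists>w\<in>V. E v w"
    and "graph_iso (min_psd_sets V E) te_adj (K_verts n) K_adj"
  shows "graph_iso V E (K_verts n) K_adj \<or> (is_tree V E \<and> card V = n)"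
proof -
  note G = assms(1)
  define F where "F = min_psd_sets V E"
  from assms(4) obtain f where bij: "bij_betw f F (K_verts n)"
    and fadj: "\<forall>x\<in>F. \<forall>y\<in>F. te_adj x y \<longleftrightarrow> K_adj (f x) (f y)"
    unfolding graph_iso_def F_def by blast
  have adjF: "te_adj S T" if "S \<in> F" "T \<in> F" "S \<noteq> T" for S T
  proof -
    have "f S \<noteq> f T" using bij that unfolding bij_betw_def inj_on_def by blast
    then show "te_adj S T" using fadj that unfolding K_adj_def by blast
  qed
  have cardF: "card F = n" using bij_betw_same_card[OF bij] unfolding K_verts_def by simp
  have finV: "finite V" by (rule sg_fin[OF G])
  obtain S0 where S0F: "S0 \<in> F" using zplus_ex minF_iff unfolding F_def by blast
  have F0: "psd_forcing_set V E S0" "card S0 = Zplus V E" using S0F minF_iff unfolding F_def by blast+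
  have S0V: "S0 \<subseteq> V" by (rule forcing_sub[OF F0(1)])
  have S0ne: "S0 \<noteq> {}"
  proof
    assume "S0 = {}"
    then have "psd_reach V E {} V" using F0(1) unfolding psd_forcing_set_def by simp
    then have "V = {}" by (rule reach_empty)
    then show False using assms(2) by simp
  qed
  have drop1: "psd_forcing_set V E (V - {x})" if x: "x \<in> V" for x
  proof -
    obtain z where z: "z \<in> V" "E x z" using assms(3) x by blast
    have zx: "z \<noteq> x" using z(2) sg_irr[OF G] by metis
    have zR: "z \<in> V - {x}" using z zx by blast
    have nx: "x \<notin> V - {x}" by blast
    have r: "psd_reach V E (V - {x}) (insert x (V - {x}))"
    proof (rule force1[OF G zR x nx sg_sym[OF G z(2)]])
      fix z' assume "z' \<in> V - (V - {x})" then have "z' = x" by blast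
      then show "\<not> E x z'" using sg_irr[OF G, of x] by simp
    qed
    have "insert x (V - {x}) = V" using x by auto
    then show ?thesis using r unfolding psd_forcing_set_def by auto
  qed
  have cardV0: "card V > 0" using finV assms(2) card_gt_0_iff by blast
  have zle: "Zplus V E \<le> card V - 1"
  proof -
    obtain x where x: "x \<in> V" using assms(2) by blast
    have "Zplus V E \<le> card (V - {x})" by (rule zplus_le[OF drop1[OF x]])
    then show ?thesis using x by (simp add: card_Diff_singleton)
  qed
  have S0neV: "V - S0 \<noteq> {}"
  proof
    assume "V - S0 = {}"
    then have "S0 = V" using S0V by blast
    then show False using F0(2) zle cardV0 by simp
  qed
  have rep: "\<exists>p q. p \<in> S0 \<and> q \<in> V \<and> q \<notin> S0 \<and> T = insert q (S0 - {p})"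
    if T: "T \<in> F" "T \<noteq> S0" for T
  proof -
    have "te_adj S0 T" using adjF[OF S0F T(1)] T(2) by metis
    then obtain p q where pq: "S0 - T = {p}" "T - S0 = {q}" unfolding te_adj_def by blast
    have TV: "T \<subseteq> V" using T(1) forcing_sub minF_iff unfolding F_def by blast
    have "p \<in> S0" using pq(1) by blast
    moreover have "q \<in> V" "q \<notin> S0" using pq(2) TV by blast+
    moreover have "T = insert q (S0 - {p})"
    proof
      show "T \<subseteq> insert q (S0 - {p})" using pq by blast
      show "insert q (S0 - {p}) \<subseteq> T" using pq by blast
    qed
    ultimately show ?thesis by blast
  qed
  have pairF: "p = p' \<or> q = q'"
    if "insert q (S0 - {p}) \<in> F" "insert q' (S0 - {p'}) \<in> F" "p \<in> S0" "p' \<in> S0" "q \<notin> S0" "q' \<notin> S0"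
    for p q p' q'
  proof (rule ccontr)
    assume "\<not> (p = p' \<or> q = q')"
    then have "p \<noteq> p'" "q \<noteq> q'" by auto
    from pair_set[OF that(3-6) this] adjF[OF that(1,2)] show False by blast
  qed
  have dich: "(\<exists>s. S0 = {s}) \<or> (\<exists>t. V - S0 = {t})"
  proof (rule ccontr)
    assume nd: "\<not> ((\<exists>s. S0 = {s}) \<or> (\<exists>t. V - S0 = {t}))"
    obtain a1 where a1: "a1 \<in> S0" using S0ne by blast
    obtain a2 where a2: "a2 \<in> S0" "a2 \<noteq> a1" using nd a1 by blast
    obtain b1 where b1: "b1 \<in> V - S0" using S0neV by blast
    obtain b2 where b2: "b2 \<in> V - S0" "b2 \<noteq> b1" using nd b1 by blast
    have Irep: "\<exists>q. q \<notin> S0 \<and> insert q (S0 - {a}) \<in> F" if a: "a \<in> S0" for a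
    proof -
      obtain T where T: "T \<in> F" "a \<notin> T" using I_lemma[OF G assms(3) S0F[unfolded F_def] a] unfolding F_def by blast
      then have "T \<noteq> S0" using a by blast
      then obtain p q where pq: "p \<in> S0" "q \<notin> S0" "T = insert q (S0 - {p})" using rep T(1) by blast
      then have "p = a" using T(2) a by blast
      then show ?thesis using pq T(1) by blast
    qed
    have Urep: "\<exists>p. p \<in> S0 \<and> insert b (S0 - {p}) \<in> F" if b: "b \<in> V - S0" for b
    proof -
      obtain T where T: "T \<in> F" "b \<in> T" using U_lemma[OF G S0F[unfolded F_def]] b unfolding F_def by blast
      then have "T \<noteq> S0" using b by blast
      then obtain p q where pq: "p \<in> S0" "q \<notin> S0" "T = insert q (S0 - {p})" using rep T(1) by blast
      then have "q = b" using T(2) b by blast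
      then show ?thesis using pq T(1) by blast
    qed
    obtain q1 where q1: "q1 \<notin> S0" "insert q1 (S0 - {a1}) \<in> F" using Irep[OF a1] by blast
    obtain q2 where q2: "q2 \<notin> S0" "insert q2 (S0 - {a2}) \<in> F" using Irep[OF a2(1)] by blast
    obtain o1 where o1: "o1 \<in> S0" "insert b1 (S0 - {o1}) \<in> F" using Urep[OF b1] by blast
    obtain o2 where o2: "o2 \<in> S0" "insert b2 (S0 - {o2}) \<in> F" using Urep[OF b2(1)] by blast
    have b1n: "b1 \<notin> S0" "b2 \<notin> S0" using b1 b2 by blast+
    have P1: "q1 = q2" using pairF[OF q1(2) q2(2) a1 a2(1) q1(1) q2(1)] a2(2) by metis
    have P2: "o1 = o2" using pairF[OF o1(2) o2(2) o1(1) o2(1) b1n] b2(2) by metis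
    have P3: "a1 = o1 \<or> q1 = b1" using pairF[OF q1(2) o1(2) a1 o1(1) q1(1) b1n(1)] .
    have P4: "a1 = o2 \<or> q1 = b2" using pairF[OF q1(2) o2(2) a1 o2(1) q1(1) b1n(2)] .
    have P5: "a2 = o1 \<or> q2 = b1" using pairF[OF q2(2) o1(2) a2(1) o1(1) q2(1) b1n(1)] .
    have P6: "a2 = o2 \<or> q2 = b2" using pairF[OF q2(2) o2(2) a2(1) o2(1) q2(1) b1n(2)] .
    show False using P1 P2 P3 P4 P5 P6 a2(2) b2(2) by metis
  qed
  show ?thesis
  proof (cases "\<exists>s. S0 = {s}")
    case True
    then obtain s where s: "S0 = {s}" by blast
    have k1: "Zplus V E = 1" using F0(2) s by simp
    have single: "{x} \<in> F" if x: "x \<in> V" for x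
    proof -
      obtain T where T: "T \<in> F" "x \<in> T" using U_lemma[OF G S0F[unfolded F_def] x] unfolding F_def by blast
      have "card T = Suc 0" using T(1) k1 unfolding F_def minF_iff by simp
      then obtain y where "T = {y}" unfolding card_1_singleton_iff by blast
      then show ?thesis using T by simp
    qed
    have Feq: "F = (\<lambda>x. {x}) ` V"
    proof
      show "(\<lambda>x. {x}) ` V \<subseteq> F" using single by blast
      show "F \<subseteq> (\<lambda>x. {x}) ` V"
      proof
        fix T assume T: "T \<in> F"
        have "card T = Suc 0" using T k1 unfolding F_def minF_iff by simp
        then obtain y where y: "T = {y}" unfolding card_1_singleton_iff by blast
        have "T \<subseteq> V" using T forcing_sub minF_iff unfolding F_def by blast
        then show "T \<in> (\<lambda>x. {x}) ` V" using y by blast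
      qed
    qed
    have "card F = card V" unfolding Feq by (rule card_image) (simp add: inj_on_def)
    then have cV: "card V = n" using cardF by simp
    have forc: "psd_forcing_set V E {x}" if "x \<in> V" for x
      using single[OF that] minF_iff unfolding F_def by blast
    have conn: "connected_graph V E"
      unfolding connected_graph_def
    proof (intro conjI ballI)
      show "V \<noteq> {}" by (rule assms(2))
      fix x y assume x: "x \<in> V" and y: "y \<in> V"
      have "psd_reach V E {x} V" using forc[OF x] unfolding psd_forcing_set_def by simp
      from reach_conn[OF this x y] show "conn_in V E x y" .
    qed
    have nocyc: "\<not> (\<exists>cs. is_cycle V E cs)"
    proof
      assume "\<exists>cs. is_cycle V E cs"
      then obtain cs where c: "is_cycle V E cs" by blast
      have cc: "length cs \<ge> 3" "set cs \<subseteq> V" using c unfolding is_cycle_def by auto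
      have "cs ! 0 \<in> set cs" using cc(1) by (intro nth_mem) auto
      then have "cs ! 0 \<in> V" using cc(2) by blast
      from no_cycle_single[OF G forc[OF this] c refl] show False .
    qed
    show ?thesis using conn nocyc cV unfolding is_tree_def by blast
  next
    case False
    then obtain t where t: "V - S0 = {t}" using dich by blast
    have tV: "t \<in> V" using t by blast
    have S0eq: "S0 = V - {t}" using t S0V by blast
    have kV: "Zplus V E = card V - 1" using F0(2) S0eq tV by (simp add: card_Diff_singleton)
    have complete: "E x y" if xy: "x \<in> V" "y \<in> V" "x \<noteq> y" for x y
    proof (rule ccontr)
      assume nxy: "\<not> E x y"
      define R where "R = V - {x, y}"
      obtain z where z: "z \<in> V" "E x z" using assms(3) xy(1) by blast
      have zx: "z \<noteq> x" using z(2) sg_irr[OF G] by metis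
      have zy: "z \<noteq> y" using z(2) nxy by metis
      have zR: "z \<in> R" unfolding R_def using z zx zy by blast
      have nx: "x \<notin> R" unfolding R_def by blast
      have r: "psd_reach V E R (insert x R)"
      proof (rule force1[OF G zR xy(1) nx sg_sym[OF G z(2)]])
        fix z' assume "z' \<in> V - R" then have "z' = x \<or> z' = y" unfolding R_def by blast
        then show "\<not> E x z'" using sg_irr[OF G, of x] nxy by metis
      qed
      have "insert x R = V - {y}" unfolding R_def using xy by auto
      then have r2: "psd_reach V E R (V - {y})" using r by simp
      have RV: "R \<subseteq> V" unfolding R_def by blast
      have "psd_reach V E R V" by (rule reach_then[OF r2 drop1[OF xy(2)] order_refl RV])
      then have "psd_forcing_set V E R" unfolding psd_forcing_set_def using RV by blast
      then have "Zplus V E \<le> card R" by (rule zplus_le)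
      moreover have "card R = card V - 2" unfolding R_def using xy finV
        by (simp add: card_Diff_subset)
      moreover have "card V \<ge> 2"
      proof -
        have "{x, y} \<subseteq> V" using xy by blast
        then have "card {x, y} \<le> card V" using finV card_mono by blast
        then show ?thesis using xy(3) by simp
      qed
      ultimately show False using kV by linarith
    qed
    have Feq: "F = (\<lambda>x. V - {x}) ` V"
    proof
      show "(\<lambda>x. V - {x}) ` V \<subseteq> F"
      proof
        fix T assume "T \<in> (\<lambda>x. V - {x}) ` V"
        then obtain x where x: "x \<in> V" "T = V - {x}" by blast
        have "card T = Zplus V E" using x kV by (simp add: card_Diff_singleton)
        then show "T \<in> F" using drop1[OF x(1)] x(2) minF_iff unfolding F_def by blast
      qed
      show "F \<subseteq> (\<lambda>x. V - {x}) ` V"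
      proof
        fix T assume T: "T \<in> F"
        have TV: "T \<subseteq> V" using T forcing_sub minF_iff unfolding F_def by blast
        have cT: "card T = card V - 1" using T kV unfolding F_def minF_iff by simp
        have "T \<noteq> V" using cT cardV0 by auto
        then obtain x where x: "x \<in> V" "x \<notin> T" using TV by blast
        have sub: "T \<subseteq> V - {x}" using TV x by blast
        have "card T = card (V - {x})" using cT x by (simp add: card_Diff_singleton)
        then have "T = V - {x}" using card_subset_eq[OF _ sub] finV by blast
        then show "T \<in> (\<lambda>x. V - {x}) ` V" using x by blast
      qed
    qed
    have "inj_on (\<lambda>x. V - {x}) V" unfolding inj_on_def by blast
    then have "card F = card V" unfolding Feq by (rule card_image)
    then have cV: "card V = n" using cardF by simp
    obtain h where h: "bij_betw h V {0..<n}"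
      using finite_same_card_bij[OF finV, of "{0..<n}"] cV by auto
    have "\<forall>x\<in>V. \<forall>y\<in>V. E x y \<longleftrightarrow> K_adj (h x) (h y)"
    proof (intro ballI)
      fix x y assume x: "x \<in> V" and y: "y \<in> V"
      have "h x = h y \<longleftrightarrow> x = y" using h x y unfolding bij_betw_def inj_on_def by blast
      moreover have "E x y \<longleftrightarrow> x \<noteq> y" using complete[OF x y] sg_irr[OF G, of x] by blast
      ultimately show "E x y \<longleftrightarrow> K_adj (h x) (h y)" unfolding K_adj_def by blast
    qed
    then have "graph_iso V E (K_verts n) K_adj" unfolding graph_iso_def K_verts_def using h by blast
    then show ?thesis by blast
  qed
qed

end
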